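(* Consider the single-element, single-slab space-time SBP scheme with weakly imposed homogeneous Dirichlet boundary conditions: unknowns $\boldsymbol\rho,\boldsymbol g_1,\dots,\boldsymbol g_{n_v}$ satisfying $$\mathsf D_t\boldsymbol\rho+\mathsf D_x\langle v\boldsymbol g\rangle=-\sigma_a\boldsymbol\rho+\mathsf{SAT}^{\rho}_L+\mathsf{SAT}^{\rho}_R-\mathsf H_t^{-1}\mathsf t_B\mathsf t_B^\top(\boldsymbol\rho-\boldsymbol\rho(0)),$$ $$\mathsf D_t\boldsymbol g_k+\tfrac{v_k}{\varepsilon}\mathsf D_x\boldsymbol g_k-\tfrac1\varepsilon\langle v\mathsf D_x\boldsymbol g\rangle+\tfrac{v_k}{\varepsilon^2}\mathsf D_x\boldsymbol\rho=-\Big(\tfrac{\sigma_s}{\varepsilon^2}+\sigma_a\Big)\boldsymbol g_k+\mathsf{SAT}^{g_k}_{LR}-\langle\mathsf{SAT}^{g}_{LR}\rangle-\mathsf H_t^{-1}\mathsf t_B\mathsf t_B^\top(\boldsymbol g_k-\boldsymbol g_k(0)),$$ $k=1,\dots,n_v$, where $\mathsf{SAT}^\rho_L=-\tau_\rho\mathsf H_x^{-1}\mathsf t_L\mathsf t_L^\top\langle v^+(\boldsymbol\rho+\varepsilon\boldsymbol g)\rangle$, $\mathsf{SAT}^\rho_R=\tau_\rho\mathsf H_x^{-1}\mathsf t_R\mathsf t_R^\top\langle v^-(\boldsymbol\rho+\varepsilon\boldsymbol g)\rangle$, and $\mathsf{SAT}^{g_k}_{LR}=-\tau_g v_k\mathsf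 H_x^{-1}\mathsf t_L\mathsf t_L^\top(\boldsymbol\rho+\varepsilon\boldsymbol g_k)$ if $v_k>0$, $\mathsf{SAT}^{g_k}_{LR}=\tau_g v_k\mathsf H_x^{-1}\mathsf t_R\mathsf t_R^\top(\boldsymbol\rho+\varepsilon\boldsymbol g_k)$ if $v_k<0$ (and $0$ if $v_k=0$), with initial data satisfying $\langle\boldsymbol g(0)\rangle=0$. If $\tau_\rho=\frac1{2\varepsilon}$, $\tau_g=\frac1{2\varepsilon^2}$ and the velocity quadrature is symmetric, then the scheme is stable: every solution satisfies $$\tfrac12\boldsymbol\rho^\top(\bar{\boldsymbol t}_T\bar{\boldsymbol t}_T^\top\otimes\bar{\mathsf H}_x)\boldsymbol\rho+\tfrac{\varepsilon^2}2\langle\boldsymbol g^\top(\bar{\boldsymbol t}_T\bar{\boldsymbol t}_T^\top\otimes\bar{\mathsf H}_x)\boldsymbol g\rangle\le\tfrac12\boldsymbol\rho(0)^\top(\bar{\boldsymbol t}_B\bar{\boldsymbol t}_B^\top\otimes\bar{\mathsf H}_x)\boldsymbol\rho(0)+\tfrac{\varepsilon^2}2\langle\boldsymbol g(0)^\top(\bar{\boldsymbol t}_B\bar{\boldsymbol t}_B^\top\otimes\bar{\mathsf H}_x)\boldsymbol g(0)\rangle.$$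
   Context: SBP operators: $\bar{\mathsf D}=\bar{\mathsf H}^{-1}\bar{\mathsf Q}$ on nodes $x_0<\dots<x_n$ is a degree-$p$ SBP approximation of $d/dx$ if $\bar{\mathsf D}\boldsymbol x^k=k\boldsymbol x^{k-1}$ for $0\le k\le p$, $\bar{\mathsf H}$ is diagonal symmetric positive definite, and $\bar{\mathsf Q}+\bar{\mathsf Q}^\top=\bar{\boldsymbol t}_R\bar{\boldsymbol t}_R^\top-\bar{\boldsymbol t}_L\bar{\boldsymbol t}_L^\top=\mathrm{diag}(-1,0,\dots,0,1)$, with $\bar{\boldsymbol t}_L,\bar{\boldsymbol t}_R$ the first/last unit vectors. $\bar{\mathsf D}_x=\bar{\mathsf H}_x^{-1}\bar{\mathsf Q}_x$ on $n_x+1$ spatial nodes; $\bar{\mathsf D}_t=\bar{\mathsf H}_t^{-1}\bar{\mathsf Q}_t$ on $n_t+1$ temporal nodes with first/last unit vectors $\bar{\boldsymbol t}_B,\bar{\boldsymbol t}_T$. With identities $\mathsf I_{n_x},\mathsf I_{n_t}$ of sizes $n_x+1,n_t+1$: $\mathsf D_t=\bar{\mathsf D}_t\otimes\mathsf I_{n_x}$, $\mathsf D_x=\mathsf I_{n_t}\otimes\bar{\mathsf D}_x$, $\mathsf H_t=\bar{\mathsf H}_t\otimes\mathsf I_{n_x}$, $\mathsf H_x=\mathsf I_{n_t}\otimes\bar{\mathsf H}_x$, $\mathsf t_{R/L}=\mathsf I_{n_t}\otimes\bar{\boldsymbol t}_{R/L}$, $\mathsf t_B=\bar{\boldsymbol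 t}_B\otimes\mathsf I_{n_x}$. Velocity nodes $v_k$, weights $\omega_k>0$, $k=1,\dots,n_v$, with $\sum\omega_k=1$, $\sum\omega_kv_k=0$; $v^+=\max(v,0)$, $v^-=\min(v,0)$; $\langle\boldsymbol a\rangle=\sum_k\omega_k\boldsymbol a_k$, e.g. $\langle v^+(\boldsymbol\rho+\varepsilon\boldsymbol g)\rangle=\sum_k\omega_kv_k^+(\boldsymbol\rho+\varepsilon\boldsymbol g_k)$. The quadrature is symmetric if $\omega_k=\omega_{k'}$ and $v_k=-v_{k'}$ whenever $k+k'=n_v+1$. Parameters $\varepsilon>0$, $\sigma_s>0$, $\sigma_a\ge0$; $\boldsymbol\rho(0),\boldsymbol g_k(0)$ given initial-data vectors. *)

theory Defs
  imports Main "HOL.Real"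
begin

text \<open>Space-time vectors (Kronecker ordering: time index
  outer, space index inner) are functions u i j with 0 <= i <= n_t (time) and
  0 <= j <= n_x (space).  Velocity-indexed families are functions of k, 1 <= k <= n_v.\<close>

definition diag_pd :: "nat \<Rightarrow> (nat \<Rightarrow> nat \<Rightarrow> real) \<Rightarrow> bool" where
  "diag_pd n H \<longleftrightarrow> (\<forall>i\<le>n. \<forall>j\<le>n. i \<noteq> j \<longrightarrow> H i j = 0) \<and> (\<forall>i\<le>n. H i i > 0)"

definition sbp_D :: "(nat \<Rightarrow> nat \<Rightarrow> real) \<Rightarrow> (nat \<Rightarrow> nat \<Rightarrow> real) \<Rightarrow> nat \<Rightarrow> nat \<Rightarrow> real" where
  "sbp_D H Q i j = Q i j / H i i"

definition is_sbp :: "nat \<Rightarrow> (nat \<Rightarrow> real) \<Rightarrow> (nat \<Rightarrow> nat \<Rightarrow> real) \<Rightarrow> (nat \<Rightarrow> nat \<Rightarrow> real) \<Rightarrow> nat \<Rightarrow> bool" where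
  "is_sbp n x H Q p \<longleftrightarrow>
     1 \<le> n \<and> (\<forall>i<n. x i < x (Suc i)) \<and> diag_pd n H \<and>
     (\<forall>i\<le>n. \<forall>j\<le>n. Q i j + Q j i =
         (if i = j \<and> i = n then 1 else 0) - (if i = j \<and> i = 0 then 1 else 0)) \<and>
     (\<forall>k\<le>p. \<forall>i\<le>n. (\<Sum>j\<le>n. sbp_D H Q i j * x j ^ k) = real k * x i ^ (k - 1))"

definition vel_quad :: "nat \<Rightarrow> (nat \<Rightarrow> real) \<Rightarrow> (nat \<Rightarrow> real) \<Rightarrow> bool" where
  "vel_quad nv \<omega> v \<longleftrightarrow> 1 \<le> nv \<and> (\<forall>k\<in>{1..nv}. \<omega> k > 0) \<and>
     (\<Sum>k=1..nv. \<omega> k) = 1 \<and> (\<Sum>k=1..nv. \<omega> k * v k) = 0"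

definition sym_quad :: "nat \<Rightarrow> (nat \<Rightarrow> real) \<Rightarrow> (nat \<Rightarrow> real) \<Rightarrow> bool" where
  "sym_quad nv \<omega> v \<longleftrightarrow> (\<forall>k\<in>{1..nv}. \<forall>k'\<in>{1..nv}. k + k' = nv + 1 \<longrightarrow>
     \<omega> k = \<omega> k' \<and> v k = - v k')"

definition vpos :: "real \<Rightarrow> real" where "vpos a = max a 0"
definition vneg :: "real \<Rightarrow> real" where "vneg a = min a 0"

definition vavg :: "nat \<Rightarrow> (nat \<Rightarrow> real) \<Rightarrow> (nat \<Rightarrow> real) \<Rightarrow> real" where
  "vavg nv \<omega> a = (\<Sum>k=1..nv. \<omega> k * a k)"

text \<open>(D_t u)(i,j) with D_t = Dbar_t (x) I and (D_x u)(i,j) with D_x = I (x) Dbar_x.\<close>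
definition Dt_app :: "nat \<Rightarrow> (nat \<Rightarrow> nat \<Rightarrow> real) \<Rightarrow> (nat \<Rightarrow> nat \<Rightarrow> real) \<Rightarrow> (nat \<Rightarrow> nat \<Rightarrow> real) \<Rightarrow> nat \<Rightarrow> nat \<Rightarrow> real" where
  "Dt_app nt Ht Qt u i j = (\<Sum>i'\<le>nt. sbp_D Ht Qt i i' * u i' j)"

definition Dx_app :: "nat \<Rightarrow> (nat \<Rightarrow> nat \<Rightarrow> real) \<Rightarrow> (nat \<Rightarrow> nat \<Rightarrow> real) \<Rightarrow> (nat \<Rightarrow> nat \<Rightarrow> real) \<Rightarrow> nat \<Rightarrow> nat \<Rightarrow> real" where
  "Dx_app nx Hx Qx u i j = (\<Sum>j'\<le>nx. sbp_D Hx Qx j j' * u i j')"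

text \<open>(H_x^{-1} t_L t_L^T w)(i,j) and (H_x^{-1} t_R t_R^T w)(i,j).\<close>
definition liftL :: "(nat \<Rightarrow> nat \<Rightarrow> real) \<Rightarrow> (nat \<Rightarrow> nat \<Rightarrow> real) \<Rightarrow> nat \<Rightarrow> nat \<Rightarrow> real" where
  "liftL Hx w i j = (if j = 0 then w i 0 / Hx 0 0 else 0)"

definition liftR :: "nat \<Rightarrow> (nat \<Rightarrow> nat \<Rightarrow> real) \<Rightarrow> (nat \<Rightarrow> nat \<Rightarrow> real) \<Rightarrow> nat \<Rightarrow> nat \<Rightarrow> real" where
  "liftR nx Hx w i j = (if j = nx then w i nx / Hx nx nx else 0)"

text \<open>(H_t^{-1} t_B t_B^T w)(i,j).\<close>
definition liftB :: "(nat \<Rightarrow> nat \<Rightarrow> real) \<Rightarrow> (nat \<Rightarrow> nat \<Rightarrow> real) \<Rightarrow> nat \<Rightarrow> nat \<Rightarrow> real" where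
  "liftB Ht w i j = (if i = 0 then w 0 j / Ht 0 0 else 0)"

definition satg :: "nat \<Rightarrow> (nat \<Rightarrow> nat \<Rightarrow> real) \<Rightarrow> real \<Rightarrow> real \<Rightarrow> real \<Rightarrow>
    (nat \<Rightarrow> nat \<Rightarrow> real) \<Rightarrow> (nat \<Rightarrow> nat \<Rightarrow> real) \<Rightarrow> nat \<Rightarrow> nat \<Rightarrow> real" where
  "satg nx Hx \<tau>g \<epsilon> v \<rho> gk i j =
     (if v > 0 then - \<tau>g * v * liftL Hx (\<lambda>i' j'. \<rho> i' j' + \<epsilon> * gk i' j') i j
      else if v < 0 then \<tau>g * v * liftR nx Hx (\<lambda>i' j'. \<rho> i' j' + \<epsilon> * gk i' j') i j
      else 0)"

text \<open>u^T (e_m e_m^T (x) Hbar_x) u, for time index m.\<close>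
definition slab_energy :: "nat \<Rightarrow> (nat \<Rightarrow> nat \<Rightarrow> real) \<Rightarrow> nat \<Rightarrow> (nat \<Rightarrow> nat \<Rightarrow> real) \<Rightarrow> real" where
  "slab_energy nx Hx m u = (\<Sum>j\<le>nx. \<Sum>j'\<le>nx. u m j * Hx j j' * u m j')"

end

theory Submission
  imports Defs
begin


lemma bilin:
  fixes a b :: "nat \<Rightarrow> real"
  assumes n: "1 \<le> n"
    and Q: "\<forall>i\<le>n. \<forall>j\<le>n. Q i j + Q j i =
         (if i = j \<and> i = n then 1 else 0) - (if i = j \<and> i = 0 then 1 else 0)"
  shows "(\<Sum>i\<le>n. \<Sum>j\<le>n. a i * Q i j * b j) + (\<Sum>i\<le>n. \<Sum>j\<le>n. b i * Q i j * a j)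
         = a n * b n - a 0 * b 0"
proof -
  have sw: "(\<Sum>i\<le>n. \<Sum>j\<le>n. b i * Q i j * a j) = (\<Sum>i\<le>n. \<Sum>j\<le>n. a i * Q j i * b j)"
    by (subst sum.swap) (simp add: mult.commute mult.left_commute)
  have "(\<Sum>i\<le>n. \<Sum>j\<le>n. a i * Q i j * b j) + (\<Sum>i\<le>n. \<Sum>j\<le>n. a i * Q j i * b j)
      = (\<Sum>i\<le>n. \<Sum>j\<le>n. a i * (Q i j + Q j i) * b j)"
    by (simp add: sum.distrib[symmetric] algebra_simps)
  also have "\<dots> = (\<Sum>i\<le>n. \<Sum>j\<le>n. a i * ((if i = j \<and> i = n then 1 else 0) - (if i = j \<and> i = 0 then 1 else 0)) * b j)"
    using Q by (intro sum.cong refl) auto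
  also have "\<dots> = (\<Sum>i\<le>n. (if i = n then a i * b i else 0) - (if i = 0 then a i * b i else 0))"
  proof (intro sum.cong refl)
    fix i assume i: "i \<in> {..n}"
    have "(\<Sum>j\<le>n. a i * ((if i = j \<and> i = n then 1 else 0) - (if i = j \<and> i = 0 then 1 else 0)) * b j)
        = (\<Sum>j\<le>n. (if j = i then (if i = n then a i * b i else 0) else 0) - (if j = i then (if i = 0 then a i * b i else 0) else 0))"
      by (intro sum.cong refl) auto
    also have "\<dots> = (if i = n then a i * b i else 0) - (if i = 0 then a i * b i else 0)"
      using i by (simp add: sum_subtractf)
    finally show "(\<Sum>j\<le>n. a i * ((if i = j \<and> i = n then 1 else 0) - (if i = j \<and> i = 0 then 1 else 0)) * b j)
        = (if i = n then a i * b i else 0) - (if i = 0 then a i * b i else 0)" .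
  qed
  also have "\<dots> = a n * b n - a 0 * b 0"
    by (simp add: sum_subtractf)
  finally show ?thesis using sw by simp
qed

lemma quadf:
  fixes a :: "nat \<Rightarrow> real"
  assumes n: "1 \<le> n"
    and Q: "\<forall>i\<le>n. \<forall>j\<le>n. Q i j + Q j i =
         (if i = j \<and> i = n then 1 else 0) - (if i = j \<and> i = 0 then 1 else 0)"
  shows "(\<Sum>i\<le>n. \<Sum>j\<le>n. a i * Q i j * a j) = (a n ^ 2 - a 0 ^ 2) / 2"
  using bilin[OF n Q, of a a] by (simp add: power2_eq_square)

lemma slab_diag:
  assumes "diag_pd nx Hx"
  shows "slab_energy nx Hx m u = (\<Sum>j\<le>nx. Hx j j * (u m j)^2)"
  unfolding slab_energy_def
proof (intro sum.cong refl)
  fix j assume j: "j \<in> {..nx}"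
  have "(\<Sum>j'\<le>nx. u m j * Hx j j' * u m j') = (\<Sum>j'\<le>nx. if j' = j then u m j * Hx j j * u m j else 0)"
    using assms j unfolding diag_pd_def by (intro sum.cong refl) auto
  also have "\<dots> = Hx j j * (u m j)^2" using j by (simp add: power2_eq_square)
  finally show "(\<Sum>j'\<le>nx. u m j * Hx j j' * u m j') = Hx j j * (u m j)^2" .
qed

lemma Dx_w:
  assumes "\<forall>j\<le>nx. Hx j j > 0"
  shows "(\<Sum>j\<le>nx. Hx j j * a j * Dx_app nx Hx Qx u i j) = (\<Sum>j\<le>nx. \<Sum>j'\<le>nx. a j * Qx j j' * u i j')"
  unfolding Dx_app_def sbp_D_def
  using assms by (intro sum.cong refl) (auto simp: sum_distrib_left field_simps intro!: sum.cong)

lemma Dt_w: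
  assumes "\<forall>i\<le>nt. Ht i i > 0"
  shows "(\<Sum>i\<le>nt. Ht i i * a i * Dt_app nt Ht Qt u i j) = (\<Sum>i\<le>nt. \<Sum>i'\<le>nt. a i * Qt i i' * u i' j)"
  unfolding Dt_app_def sbp_D_def
  using assms by (intro sum.cong refl) (auto simp: sum_distrib_left field_simps intro!: sum.cong)

lemma liftL_w:
  assumes "Hx 0 0 > 0"
  shows "(\<Sum>j\<le>nx. Hx j j * a j * liftL Hx w i j) = a 0 * w i 0"
proof -
  have "(\<Sum>j\<le>nx. Hx j j * a j * liftL Hx w i j) = (\<Sum>j\<le>nx. if j = 0 then a 0 * w i 0 else 0)"
    using assms unfolding liftL_def by (intro sum.cong refl) auto
  then show ?thesis by simp
qed

lemma liftR_w:
  assumes "Hx nx nx > 0"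
  shows "(\<Sum>j\<le>nx. Hx j j * a j * liftR nx Hx w i j) = a nx * w i nx"
proof -
  have "(\<Sum>j\<le>nx. Hx j j * a j * liftR nx Hx w i j) = (\<Sum>j\<le>nx. if j = nx then a nx * w i nx else 0)"
    using assms unfolding liftR_def by (intro sum.cong refl) auto
  then show ?thesis by simp
qed

lemma liftB_w:
  assumes "Ht 0 0 > 0"
  shows "(\<Sum>i\<le>nt. Ht i i * a i * liftB Ht w i j) = a 0 * w 0 j"
proof -
  have "(\<Sum>i\<le>nt. Ht i i * a i * liftB Ht w i j) = (\<Sum>i\<le>nt. if i = 0 then a 0 * w 0 j else 0)"
    using assms unfolding liftB_def by (intro sum.cong refl) auto
  then show ?thesis by simp
qed

lemma satg_w:
  assumes "Hx 0 0 > 0" "Hx nx nx > 0"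
  shows "(\<Sum>j\<le>nx. Hx j j * a j * satg nx Hx \<tau>g \<epsilon> vk \<rho> gk i j) =
    (if vk > 0 then - \<tau>g * vk * (a 0 * (\<rho> i 0 + \<epsilon> * gk i 0))
     else if vk < 0 then \<tau>g * vk * (a nx * (\<rho> i nx + \<epsilon> * gk i nx)) else 0)"
proof -
  have L: "(\<Sum>j\<le>nx. Hx j j * a j * (c * liftL Hx w i j)) = c * (a 0 * w i 0)" for c w
    using liftL_w[where Hx=Hx and nx=nx and a=a and w=w and i=i, OF assms(1)] by (simp add: sum_distrib_left[symmetric] algebra_simps)
  have R: "(\<Sum>j\<le>nx. Hx j j * a j * (c * liftR nx Hx w i j)) = c * (a nx * w i nx)" for c w
    using liftR_w[where Hx=Hx and nx=nx and a=a and w=w and i=i, OF assms(2)] by (simp add: sum_distrib_left[symmetric] algebra_simps)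
  show ?thesis unfolding satg_def
    using L[of "- \<tau>g * vk"] R[of "\<tau>g * vk"] by auto
qed



lemma avg_Dt: "(\<Sum>k=1..nv. \<omega> k * Dt_app nt Ht Qt (g k) i j) = Dt_app nt Ht Qt (\<lambda>i' j'. vavg nv \<omega> (\<lambda>k. g k i' j')) i j"
  unfolding Dt_app_def vavg_def
  by (simp add: sum_distrib_left mult_ac, rule sum.swap)

lemma avg_Dx: "(\<Sum>k=1..nv. \<omega> k * Dx_app nx Hx Qx (g k) i j) = Dx_app nx Hx Qx (\<lambda>i' j'. vavg nv \<omega> (\<lambda>k. g k i' j')) i j"
  unfolding Dx_app_def vavg_def
  by (simp add: sum_distrib_left mult_ac, rule sum.swap)

lemma avg_liftB: "(\<Sum>k=1..nv. \<omega> k * liftB Ht (\<lambda>i' j'. g k i' j' - g0 k i' j') i j)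
   = liftB Ht (\<lambda>i' j'. vavg nv \<omega> (\<lambda>k. g k i' j') - vavg nv \<omega> (\<lambda>k. g0 k i' j')) i j"
  unfolding liftB_def vavg_def
  by (simp add: right_diff_distrib sum_subtractf sum_divide_distrib[symmetric])

lemma avg_zero:
  fixes g g0 :: "nat \<Rightarrow> nat \<Rightarrow> nat \<Rightarrow> real"
  assumes sbp_t: "is_sbp nt ts Ht Qt pt"
    and quad: "vel_quad nv \<omega> v"
    and eps: "\<epsilon> > 0" and sig: "\<sigma> > 0"
    and g0_avg: "\<forall>i\<le>nt. \<forall>j\<le>nx. vavg nv \<omega> (\<lambda>k. g0 k i j) = 0"
    and eq_g: "\<forall>k\<in>{1..nv}. \<forall>i\<le>nt. \<forall>j\<le>nx.
        Dt_app nt Ht Qt (g k) i j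
        + v k / \<epsilon> * X k i j
        - 1 / \<epsilon> * vavg nv \<omega> (\<lambda>k'. v k' * X k' i j)
        + v k / \<epsilon>^2 * Y i j
        = - \<sigma> * g k i j
          + S k i j
          - vavg nv \<omega> (\<lambda>k'. S k' i j)
          - liftB Ht (\<lambda>i' j'. g k i' j' - g0 k i' j') i j"
  shows "\<forall>i\<le>nt. \<forall>j\<le>nx. vavg nv \<omega> (\<lambda>k. g k i j) = 0"
proof (intro allI impI)
  fix i0 j assume i0: "i0 \<le> nt" and j: "j \<le> nx"
  define cc where "cc = (\<lambda>i' j'. vavg nv \<omega> (\<lambda>k. g k i' j'))"
  have w1: "(\<Sum>k=1..nv. \<omega> k) = 1" and wv: "(\<Sum>k=1..nv. \<omega> k * v k) = 0"
    using quad unfolding vel_quad_def by auto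
  from sbp_t have nt1: "1 \<le> nt" and Hpos: "\<forall>i\<le>nt. Ht i i > 0"
    and Qt: "\<forall>i\<le>nt. \<forall>j\<le>nt. Qt i j + Qt j i =
         (if i = j \<and> i = nt then 1 else 0) - (if i = j \<and> i = 0 then 1 else 0)"
    unfolding is_sbp_def diag_pd_def by auto
  have P: "Dt_app nt Ht Qt cc i j + \<sigma> * cc i j + liftB Ht cc i j = 0" if i: "i \<le> nt" for i
  proof -
    let ?A = "\<lambda>k. Dt_app nt Ht Qt (g k) i j"
    let ?L = "\<lambda>k. liftB Ht (\<lambda>i' j'. g k i' j' - g0 k i' j') i j"
    let ?VX = "vavg nv \<omega> (\<lambda>k'. v k' * X k' i j)"
    let ?VS = "vavg nv \<omega> (\<lambda>k'. S k' i j)"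
    have pt: "\<omega> k * (?A k + ?L k + \<sigma> * g k i j) = \<omega> k * S k i j - \<omega> k * ?VS
        - (\<omega> k * v k) * X k i j / \<epsilon> + \<omega> k * ?VX / \<epsilon> - (\<omega> k * v k) * Y i j / \<epsilon>^2"
      if k: "k \<in> {1..nv}" for k
    proof -
      have h: "?A k + ?L k + \<sigma> * g k i j = S k i j - ?VS - v k / \<epsilon> * X k i j + 1 / \<epsilon> * ?VX - v k / \<epsilon>^2 * Y i j"
        using eq_g k i j by fastforce
      have "\<omega> k * (?A k + ?L k + \<sigma> * g k i j) = \<omega> k * (S k i j - ?VS - v k / \<epsilon> * X k i j + 1 / \<epsilon> * ?VX - v k / \<epsilon>^2 * Y i j)"
        by (simp only: h)
      also have "\<dots> = \<omega> k * S k i j - \<omega> k * ?VS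
        - (\<omega> k * v k) * X k i j / \<epsilon> + \<omega> k * ?VX / \<epsilon> - (\<omega> k * v k) * Y i j / \<epsilon>^2"
        by (simp add: algebra_simps)
      finally show ?thesis .
    qed
    have "(\<Sum>k=1..nv. \<omega> k * (?A k + ?L k + \<sigma> * g k i j)) =
       (\<Sum>k=1..nv. \<omega> k * S k i j - \<omega> k * ?VS
        - (\<omega> k * v k) * X k i j / \<epsilon> + \<omega> k * ?VX / \<epsilon> - (\<omega> k * v k) * Y i j / \<epsilon>^2)"
      using pt by (rule sum.cong[OF refl])
    also have "\<dots> = (\<Sum>k=1..nv. \<omega> k * S k i j) - (\<Sum>k=1..nv. \<omega> k) * ?VS
        - (\<Sum>k=1..nv. \<omega> k * v k * X k i j) / \<epsilon> + (\<Sum>k=1..nv. \<omega> k) * ?VX / \<epsilon>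
        - (\<Sum>k=1..nv. \<omega> k * v k) * Y i j / \<epsilon>^2"
      by (simp add: sum_subtractf sum.distrib sum_distrib_right sum_divide_distrib)
    also have "\<dots> = 0"
      using w1 wv by (simp add: vavg_def mult.assoc)
    finally have "(\<Sum>k=1..nv. \<omega> k * (?A k + ?L k + \<sigma> * g k i j)) = 0" .
    moreover have "(\<Sum>k=1..nv. \<omega> k * (?A k + ?L k + \<sigma> * g k i j))
       = (\<Sum>k=1..nv. \<omega> k * ?A k) + (\<Sum>k=1..nv. \<omega> k * ?L k) + \<sigma> * (\<Sum>k=1..nv. \<omega> k * g k i j)"
      by (simp add: algebra_simps sum.distrib sum_distrib_left)
    moreover have "liftB Ht (\<lambda>i' j'. cc i' j' - vavg nv \<omega> (\<lambda>k. g0 k i' j')) i j = liftB Ht cc i j"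
      using g0_avg j unfolding liftB_def by auto
    ultimately show ?thesis
      using avg_Dt[of \<omega> nt Ht Qt g i j] avg_liftB[of \<omega> Ht g g0 i j]
      unfolding cc_def by (simp add: vavg_def)
  qed
  have S0: "(\<Sum>i\<le>nt. Ht i i * cc i j * (Dt_app nt Ht Qt cc i j + \<sigma> * cc i j + liftB Ht cc i j)) = 0"
    using P by simp
  have S1: "(\<Sum>i\<le>nt. Ht i i * cc i j * (Dt_app nt Ht Qt cc i j + \<sigma> * cc i j + liftB Ht cc i j))
     = (\<Sum>i\<le>nt. Ht i i * cc i j * Dt_app nt Ht Qt cc i j) + \<sigma> * (\<Sum>i\<le>nt. Ht i i * (cc i j)^2)
       + (\<Sum>i\<le>nt. Ht i i * cc i j * liftB Ht cc i j)"
    by (simp add: algebra_simps sum.distrib sum_distrib_left power2_eq_square)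
  have S2: "(\<Sum>i\<le>nt. Ht i i * cc i j * Dt_app nt Ht Qt cc i j) = ((cc nt j)^2 - (cc 0 j)^2) / 2"
    using Dt_w[where Ht=Ht and nt=nt and a="\<lambda>i. cc i j" and Qt=Qt and u=cc and j=j, OF Hpos] quadf[OF nt1 Qt, of "\<lambda>i. cc i j"] by simp
  have S3: "(\<Sum>i\<le>nt. Ht i i * cc i j * liftB Ht cc i j) = (cc 0 j)^2"
    using liftB_w[where Ht=Ht and nt=nt and a="\<lambda>i. cc i j" and w=cc and j=j] Hpos by (simp add: power2_eq_square)
  have E: "((cc nt j)^2 + (cc 0 j)^2) / 2 + \<sigma> * (\<Sum>i\<le>nt. Ht i i * (cc i j)^2) = 0"
    using S0 S1 S2 S3 by (simp add: field_simps)
  have nn: "0 \<le> (\<Sum>i\<le>nt. Ht i i * (cc i j)^2)"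
    using Hpos by (intro sum_nonneg) (simp add: less_imp_le)
  have "(\<Sum>i\<le>nt. Ht i i * (cc i j)^2) = 0"
  proof -
    have h1: "0 \<le> ((cc nt j)^2 + (cc 0 j)^2)/2" by simp
    have h2: "0 \<le> \<sigma> * (\<Sum>i\<le>nt. Ht i i * (cc i j)^2)" using sig nn by simp
    have "\<sigma> * (\<Sum>i\<le>nt. Ht i i * (cc i j)^2) = 0" using E h1 h2 by linarith
    then show ?thesis using sig by simp
  qed
  then have "Ht i0 i0 * (cc i0 j)^2 = 0"
    using Hpos i0 by (subst (asm) sum_nonneg_eq_0_iff) (auto simp: less_imp_le)
  then show "vavg nv \<omega> (\<lambda>k. g k i0 j) = 0"
    using Hpos i0 unfolding cc_def by fastforce
qed



lemma swap3: "(\<Sum>j\<in>A. \<Sum>j'\<in>B. \<Sum>k\<in>C. f j j' k) = (\<Sum>k\<in>C. \<Sum>j\<in>A. \<Sum>j'\<in>B. f j j' k)"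
proof -
  have "(\<Sum>j\<in>A. \<Sum>j'\<in>B. \<Sum>k\<in>C. f j j' k) = (\<Sum>j\<in>A. \<Sum>k\<in>C. \<Sum>j'\<in>B. f j j' k)"
    by (rule sum.cong[OF refl], rule sum.swap)
  also have "\<dots> = (\<Sum>k\<in>C. \<Sum>j\<in>A. \<Sum>j'\<in>B. f j j' k)" by (rule sum.swap)
  finally show ?thesis .
qed

lemma psi_le:
  fixes \<epsilon> v aL bL aR bR :: real
  assumes eps: "\<epsilon> > 0"
  shows "- (1/(2*\<epsilon>)) * (aL * (vpos v * (aL + \<epsilon> * bL))) + (1/(2*\<epsilon>)) * (aR * (vneg v * (aR + \<epsilon> * bR)))
    - v * (aR * bR - aL * bL)
    + \<epsilon>^2 * (if v > 0 then - (1/(2*\<epsilon>^2)) * v * (bL * (aL + \<epsilon> * bL))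
       else if v < 0 then (1/(2*\<epsilon>^2)) * v * (bR * (aR + \<epsilon> * bR)) else 0)
    - \<epsilon>^2 * (v / \<epsilon> * ((bR^2 - bL^2) / 2))
    - v / (2*\<epsilon>) * (aR^2 - aL^2) \<le> 0"
proof (cases "v > 0")
  case True
  then have "vpos v = v" "vneg v = 0" by (auto simp: vpos_def vneg_def)
  then have "- (1/(2*\<epsilon>)) * (aL * (vpos v * (aL + \<epsilon> * bL))) + (1/(2*\<epsilon>)) * (aR * (vneg v * (aR + \<epsilon> * bR)))
    - v * (aR * bR - aL * bL)
    + \<epsilon>^2 * (if v > 0 then - (1/(2*\<epsilon>^2)) * v * (bL * (aL + \<epsilon> * bL))
       else if v < 0 then (1/(2*\<epsilon>^2)) * v * (bR * (aR + \<epsilon> * bR)) else 0)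
    - \<epsilon>^2 * (v / \<epsilon> * ((bR^2 - bL^2) / 2))
    - v / (2*\<epsilon>) * (aR^2 - aL^2) = - (v / (2*\<epsilon>)) * (aR + \<epsilon> * bR)^2"
    using True eps by (simp add: field_simps power2_eq_square)
  moreover have "0 \<le> (v / (2*\<epsilon>)) * (aR + \<epsilon> * bR)^2" using True eps by simp
  ultimately show ?thesis by linarith
next
  case False
  show ?thesis
  proof (cases "v < 0")
    case True
    then have "vpos v = 0" "vneg v = v" by (auto simp: vpos_def vneg_def)
    then have "- (1/(2*\<epsilon>)) * (aL * (vpos v * (aL + \<epsilon> * bL))) + (1/(2*\<epsilon>)) * (aR * (vneg v * (aR + \<epsilon> * bR)))
      - v * (aR * bR - aL * bL)
      + \<epsilon>^2 * (if v > 0 then - (1/(2*\<epsilon>^2)) * v * (bL * (aL + \<epsilon> * bL))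
         else if v < 0 then (1/(2*\<epsilon>^2)) * v * (bR * (aR + \<epsilon> * bR)) else 0)
      - \<epsilon>^2 * (v / \<epsilon> * ((bR^2 - bL^2) / 2))
      - v / (2*\<epsilon>) * (aR^2 - aL^2) = (v / (2*\<epsilon>)) * (aL + \<epsilon> * bL)^2"
      using True eps by (simp add: field_simps power2_eq_square)
    moreover have "(v / (2*\<epsilon>)) * (aL + \<epsilon> * bL)^2 \<le> 0" using True eps
      by (simp add: mult_nonpos_nonneg divide_nonpos_pos)
    ultimately show ?thesis by linarith
  next
    case False
    with \<open>\<not> v > 0\<close> have "v = 0" by simp
    then show ?thesis by (simp add: vpos_def vneg_def)
  qed
qed


lemma time_part:
  fixes u u0 :: "nat \<Rightarrow> nat \<Rightarrow> real"
  assumes nt1: "1 \<le> nt" and Htpos: "\<forall>i\<le>nt. Ht i i > 0"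
    and Qt: "\<forall>i\<le>nt. \<forall>j\<le>nt. Qt i j + Qt j i =
         (if i = j \<and> i = nt then 1 else 0) - (if i = j \<and> i = 0 then 1 else 0)"
  shows "(\<Sum>i\<le>nt. Ht i i * (\<Sum>j\<le>nx. Hx j j * u i j * (Dt_app nt Ht Qt u i j + liftB Ht (\<lambda>i' j'. u i' j' - u0 i' j') i j)))
    = (\<Sum>j\<le>nx. Hx j j * (((u nt j)^2 - (u 0 j)^2) / 2 + u 0 j * (u 0 j - u0 0 j)))"
proof -
  have "(\<Sum>i\<le>nt. Ht i i * (\<Sum>j\<le>nx. Hx j j * u i j * (Dt_app nt Ht Qt u i j + liftB Ht (\<lambda>i' j'. u i' j' - u0 i' j') i j)))
    = (\<Sum>j\<le>nx. Hx j j * ((\<Sum>i\<le>nt. Ht i i * u i j * Dt_app nt Ht Qt u i j)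
          + (\<Sum>i\<le>nt. Ht i i * u i j * liftB Ht (\<lambda>i' j'. u i' j' - u0 i' j') i j)))"
    by (simp add: sum_distrib_left sum.distrib algebra_simps sum.swap[where A="{..nx}"])
  also have "\<dots> = (\<Sum>j\<le>nx. Hx j j * (((u nt j)^2 - (u 0 j)^2) / 2 + u 0 j * (u 0 j - u0 0 j)))"
  proof (intro sum.cong refl)
    fix j
    have "(\<Sum>i\<le>nt. Ht i i * u i j * Dt_app nt Ht Qt u i j) = ((u nt j)^2 - (u 0 j)^2) / 2"
      using Dt_w[where Ht=Ht and nt=nt and a="\<lambda>i. u i j" and Qt=Qt and u=u and j=j, OF Htpos]
        quadf[OF nt1 Qt, of "\<lambda>i. u i j"] by simp
    moreover have "(\<Sum>i\<le>nt. Ht i i * u i j * liftB Ht (\<lambda>i' j'. u i' j' - u0 i' j') i j) = u 0 j * (u 0 j - u0 0 j)"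
      using liftB_w[where Ht=Ht and nt=nt and a="\<lambda>i. u i j" and w="\<lambda>i' j'. u i' j' - u0 i' j'" and j=j] Htpos by simp
    ultimately show "Hx j j * ((\<Sum>i\<le>nt. Ht i i * u i j * Dt_app nt Ht Qt u i j)
          + (\<Sum>i\<le>nt. Ht i i * u i j * liftB Ht (\<lambda>i' j'. u i' j' - u0 i' j') i j))
        = Hx j j * (((u nt j)^2 - (u 0 j)^2) / 2 + u 0 j * (u 0 j - u0 0 j))" by simp
  qed
  finally show ?thesis .
qed

lemma energy_bound:
  fixes u u0 :: "nat \<Rightarrow> nat \<Rightarrow> real"
  assumes "\<forall>j\<le>nx. Hx j j > 0"
  shows "(\<Sum>j\<le>nx. Hx j j * (((u nt j)^2 - (u 0 j)^2) / 2 + u 0 j * (u 0 j - u0 0 j)))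
     \<ge> 1/2 * (\<Sum>j\<le>nx. Hx j j * (u nt j)^2) - 1/2 * (\<Sum>j\<le>nx. Hx j j * (u0 0 j)^2)"
proof -
  have "(\<Sum>j\<le>nx. Hx j j * (((u nt j)^2 - (u 0 j)^2) / 2 + u 0 j * (u 0 j - u0 0 j)))
     \<ge> (\<Sum>j\<le>nx. Hx j j * ((u nt j)^2 / 2 - (u0 0 j)^2 / 2))"
  proof (rule sum_mono)
    fix j assume j: "j \<in> {..nx}"
    have "((u nt j)^2 - (u 0 j)^2) / 2 + u 0 j * (u 0 j - u0 0 j) - ((u nt j)^2 / 2 - (u0 0 j)^2 / 2)
      = (u 0 j - u0 0 j)^2 / 2" by (simp add: power2_eq_square field_simps)
    then have "(u nt j)^2 / 2 - (u0 0 j)^2 / 2 \<le> ((u nt j)^2 - (u 0 j)^2) / 2 + u 0 j * (u 0 j - u0 0 j)"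
      by (smt (verit) zero_le_power2 divide_nonneg_pos)
    then show "Hx j j * ((u nt j)^2 / 2 - (u0 0 j)^2 / 2) \<le> Hx j j * (((u nt j)^2 - (u 0 j)^2) / 2 + u 0 j * (u 0 j - u0 0 j))"
      using assms j by (intro mult_left_mono) auto
  qed
  also have "(\<Sum>j\<le>nx. Hx j j * ((u nt j)^2 / 2 - (u0 0 j)^2 / 2)) = 1/2 * (\<Sum>j\<le>nx. Hx j j * (u nt j)^2) - 1/2 * (\<Sum>j\<le>nx. Hx j j * (u0 0 j)^2)"
    by (simp add: sum_subtractf sum_distrib_left algebra_simps sum_divide_distrib)
  finally show ?thesis .
qed



theorem theorem3p6:
  fixes nx nt nv px pt :: nat
    and xs ts :: "nat \<Rightarrow> real"
    and Hx Qx Ht Qt :: "nat \<Rightarrow> nat \<Rightarrow> real"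
    and \<omega> v :: "nat \<Rightarrow> real"
    and \<epsilon> \<sigma>s \<sigma>a \<tau>\<rho> \<tau>g :: real
    and \<rho> \<rho>0 :: "nat \<Rightarrow> nat \<Rightarrow> real"
    and g g0 :: "nat \<Rightarrow> nat \<Rightarrow> nat \<Rightarrow> real"
  assumes sbp_x: "is_sbp nx xs Hx Qx px"
    and sbp_t: "is_sbp nt ts Ht Qt pt"
    and quad: "vel_quad nv \<omega> v"
    and symq: "sym_quad nv \<omega> v"
    and eps: "\<epsilon> > 0" and sigs: "\<sigma>s > 0" and siga: "\<sigma>a \<ge> 0"
    and tau_rho: "\<tau>\<rho> = 1 / (2 * \<epsilon>)"
    and tau_g: "\<tau>g = 1 / (2 * \<epsilon>^2)"
    and g0_avg: "\<forall>i\<le>nt. \<forall>j\<le>nx. vavg nv \<omega> (\<lambda>k. g0 k i j) = 0"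
    and eq_rho: "\<forall>i\<le>nt. \<forall>j\<le>nx.
        Dt_app nt Ht Qt \<rho> i j
        + Dx_app nx Hx Qx (\<lambda>i' j'. vavg nv \<omega> (\<lambda>k. v k * g k i' j')) i j
        = - \<sigma>a * \<rho> i j
          - \<tau>\<rho> * liftL Hx (\<lambda>i' j'. vavg nv \<omega> (\<lambda>k. vpos (v k) * (\<rho> i' j' + \<epsilon> * g k i' j'))) i j
          + \<tau>\<rho> * liftR nx Hx (\<lambda>i' j'. vavg nv \<omega> (\<lambda>k. vneg (v k) * (\<rho> i' j' + \<epsilon> * g k i' j'))) i j
          - liftB Ht (\<lambda>i' j'. \<rho> i' j' - \<rho>0 i' j') i j"
    and eq_g: "\<forall>k\<in>{1..nv}. \<forall>i\<le>nt. \<forall>j\<le>nx.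
        Dt_app nt Ht Qt (g k) i j
        + v k / \<epsilon> * Dx_app nx Hx Qx (g k) i j
        - 1 / \<epsilon> * vavg nv \<omega> (\<lambda>k'. v k' * Dx_app nx Hx Qx (g k') i j)
        + v k / \<epsilon>^2 * Dx_app nx Hx Qx \<rho> i j
        = - (\<sigma>s / \<epsilon>^2 + \<sigma>a) * g k i j
          + satg nx Hx \<tau>g \<epsilon> (v k) \<rho> (g k) i j
          - vavg nv \<omega> (\<lambda>k'. satg nx Hx \<tau>g \<epsilon> (v k') \<rho> (g k') i j)
          - liftB Ht (\<lambda>i' j'. g k i' j' - g0 k i' j') i j"
  shows "1/2 * slab_energy nx Hx nt \<rho>
           + \<epsilon>^2 / 2 * vavg nv \<omega> (\<lambda>k. slab_energy nx Hx nt (g k))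
         \<le> 1/2 * slab_energy nx Hx 0 \<rho>0
           + \<epsilon>^2 / 2 * vavg nv \<omega> (\<lambda>k. slab_energy nx Hx 0 (g0 k))"
proof -
  from sbp_x have nx1: "1 \<le> nx" and Hxpos: "\<forall>j\<le>nx. Hx j j > 0" and dx: "diag_pd nx Hx"
    and Qx: "\<forall>i\<le>nx. \<forall>j\<le>nx. Qx i j + Qx j i =
         (if i = j \<and> i = nx then 1 else 0) - (if i = j \<and> i = 0 then 1 else 0)"
    unfolding is_sbp_def diag_pd_def by auto
  from sbp_t have nt1: "1 \<le> nt" and Htpos: "\<forall>i\<le>nt. Ht i i > 0"
    and Qt: "\<forall>i\<le>nt. \<forall>j\<le>nt. Qt i j + Qt j i =
         (if i = j \<and> i = nt then 1 else 0) - (if i = j \<and> i = 0 then 1 else 0)"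
    unfolding is_sbp_def diag_pd_def by auto
  have w1: "(\<Sum>k=1..nv. \<omega> k) = 1" and wv: "(\<Sum>k=1..nv. \<omega> k * v k) = 0"
    and wpos: "\<forall>k\<in>{1..nv}. \<omega> k > 0"
    using quad unfolding vel_quad_def by auto
  have Hx0: "Hx 0 0 > 0" and HxR: "Hx nx nx > 0" using Hxpos by auto
  define \<sigma> where "\<sigma> = \<sigma>s / \<epsilon>^2 + \<sigma>a"
  have sig: "\<sigma> > 0" unfolding \<sigma>_def using sigs siga eps by (simp add: add_pos_nonneg)
  have avg0: "\<forall>i\<le>nt. \<forall>j\<le>nx. vavg nv \<omega> (\<lambda>k. g k i j) = 0"
    by (rule avg_zero[where X="\<lambda>k. Dx_app nx Hx Qx (g k)" and Y="Dx_app nx Hx Qx \<rho>"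
          and S="\<lambda>k. satg nx Hx \<tau>g \<epsilon> (v k) \<rho> (g k)" and \<sigma>=\<sigma>, OF sbp_t quad eps sig g0_avg])
       (use eq_g in \<open>simp add: \<sigma>_def\<close>)
  define VG where "VG = (\<lambda>i' j'. vavg nv \<omega> (\<lambda>k. v k * g k i' j'))"
  define F where "F = (\<lambda>i' j'. vavg nv \<omega> (\<lambda>k. vpos (v k) * (\<rho> i' j' + \<epsilon> * g k i' j')))"
  define G where "G = (\<lambda>i' j'. vavg nv \<omega> (\<lambda>k. vneg (v k) * (\<rho> i' j' + \<epsilon> * g k i' j')))"
  define Ti where "Ti = (\<lambda>i. \<Sum>j\<le>nx. Hx j j * \<rho> i j * (Dt_app nt Ht Qt \<rho> i j + liftB Ht (\<lambda>i' j'. \<rho> i' j' - \<rho>0 i' j') i j))"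
  define Tg where "Tg = (\<lambda>k i. \<Sum>j\<le>nx. Hx j j * g k i j * (Dt_app nt Ht Qt (g k) i j + liftB Ht (\<lambda>i' j'. g k i' j' - g0 k i' j') i j))"
  define BR where "BR = (\<lambda>i k. (\<Sum>j\<le>nx. \<Sum>j'\<le>nx. \<rho> i j * Qx j j' * g k i j'))"
  define BG where "BG = (\<lambda>i k. (\<Sum>j\<le>nx. \<Sum>j'\<le>nx. g k i j * Qx j j' * \<rho> i j'))"
  have perI: "Ti i + \<epsilon>^2 * (\<Sum>k=1..nv. \<omega> k * Tg k i) \<le> 0" if i: "i \<le> nt" for i
  proof -
    have T1: "Ti i = (\<Sum>j\<le>nx. Hx j j * \<rho> i j * (- \<sigma>a * \<rho> i j - \<tau>\<rho> * liftL Hx F i j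
        + \<tau>\<rho> * liftR nx Hx G i j - Dx_app nx Hx Qx VG i j))"
      unfolding Ti_def
    proof (intro sum.cong refl)
      fix j assume j: "j \<in> {..nx}"
      have "Dt_app nt Ht Qt \<rho> i j + liftB Ht (\<lambda>i' j'. \<rho> i' j' - \<rho>0 i' j') i j
          = - \<sigma>a * \<rho> i j - \<tau>\<rho> * liftL Hx F i j + \<tau>\<rho> * liftR nx Hx G i j - Dx_app nx Hx Qx VG i j"
        using eq_rho i j unfolding F_def G_def VG_def by fastforce
      then show "Hx j j * \<rho> i j * (Dt_app nt Ht Qt \<rho> i j + liftB Ht (\<lambda>i' j'. \<rho> i' j' - \<rho>0 i' j') i j)
         = Hx j j * \<rho> i j * (- \<sigma>a * \<rho> i j - \<tau>\<rho> * liftL Hx F i j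
        + \<tau>\<rho> * liftR nx Hx G i j - Dx_app nx Hx Qx VG i j)" by simp
    qed
    also have "\<dots> = - \<sigma>a * (\<Sum>j\<le>nx. Hx j j * (\<rho> i j)^2)
        - \<tau>\<rho> * (\<Sum>j\<le>nx. Hx j j * \<rho> i j * liftL Hx F i j)
        + \<tau>\<rho> * (\<Sum>j\<le>nx. Hx j j * \<rho> i j * liftR nx Hx G i j)
        - (\<Sum>j\<le>nx. Hx j j * \<rho> i j * Dx_app nx Hx Qx VG i j)"
      by (simp add: algebra_simps sum.distrib sum_subtractf sum_distrib_left power2_eq_square sum_negf)
    also have "\<dots> = - \<sigma>a * (\<Sum>j\<le>nx. Hx j j * (\<rho> i j)^2)
        - \<tau>\<rho> * (\<rho> i 0 * F i 0) + \<tau>\<rho> * (\<rho> i nx * G i nx)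
        - (\<Sum>j\<le>nx. \<Sum>j'\<le>nx. \<rho> i j * Qx j j' * VG i j')"
      using liftL_w[where Hx=Hx and nx=nx and a="\<lambda>j. \<rho> i j" and w=F and i=i, OF Hx0]
        liftR_w[where Hx=Hx and nx=nx and a="\<lambda>j. \<rho> i j" and w=G and i=i, OF HxR]
        Dx_w[where Hx=Hx and nx=nx and a="\<lambda>j. \<rho> i j" and Qx=Qx and u=VG and i=i, OF Hxpos]
      by simp
    also have "(\<Sum>j\<le>nx. \<Sum>j'\<le>nx. \<rho> i j * Qx j j' * VG i j') = (\<Sum>k=1..nv. \<omega> k * v k * BR i k)"
      unfolding VG_def BR_def vavg_def
      by (simp add: sum_distrib_left mult_ac, rule swap3)
    finally have TI: "Ti i = - \<sigma>a * (\<Sum>j\<le>nx. Hx j j * (\<rho> i j)^2)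
        - \<tau>\<rho> * (\<rho> i 0 * F i 0) + \<tau>\<rho> * (\<rho> i nx * G i nx) - (\<Sum>k=1..nv. \<omega> k * v k * BR i k)" .
    define Z where "Z = (\<lambda>j. 1 / \<epsilon> * vavg nv \<omega> (\<lambda>k'. v k' * Dx_app nx Hx Qx (g k') i j)
        - vavg nv \<omega> (\<lambda>k'. satg nx Hx \<tau>g \<epsilon> (v k') \<rho> (g k') i j))"
    define sat where "sat = (\<lambda>k. if v k > 0 then - \<tau>g * v k * (g k i 0 * (\<rho> i 0 + \<epsilon> * g k i 0))
     else if v k < 0 then \<tau>g * v k * (g k i nx * (\<rho> i nx + \<epsilon> * g k i nx)) else 0)"
    have TG: "Tg k i = - \<sigma> * (\<Sum>j\<le>nx. Hx j j * (g k i j)^2) + sat k + (\<Sum>j\<le>nx. Hx j j * g k i j * Z j)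
        - v k / \<epsilon> * (((g k i nx)^2 - (g k i 0)^2) / 2) - v k / \<epsilon>^2 * BG i k"
      if k: "k \<in> {1..nv}" for k
    proof -
      have "Tg k i = (\<Sum>j\<le>nx. Hx j j * g k i j * (- \<sigma> * g k i j + satg nx Hx \<tau>g \<epsilon> (v k) \<rho> (g k) i j
          + Z j - v k / \<epsilon> * Dx_app nx Hx Qx (g k) i j - v k / \<epsilon>^2 * Dx_app nx Hx Qx \<rho> i j))"
        unfolding Tg_def
      proof (intro sum.cong refl)
        fix j assume j: "j \<in> {..nx}"
        have "Dt_app nt Ht Qt (g k) i j + liftB Ht (\<lambda>i' j'. g k i' j' - g0 k i' j') i j
          = - \<sigma> * g k i j + satg nx Hx \<tau>g \<epsilon> (v k) \<rho> (g k) i j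
          + Z j - v k / \<epsilon> * Dx_app nx Hx Qx (g k) i j - v k / \<epsilon>^2 * Dx_app nx Hx Qx \<rho> i j"
          using eq_g k i j unfolding Z_def \<sigma>_def by fastforce
        then show "Hx j j * g k i j * (Dt_app nt Ht Qt (g k) i j + liftB Ht (\<lambda>i' j'. g k i' j' - g0 k i' j') i j)
          = Hx j j * g k i j * (- \<sigma> * g k i j + satg nx Hx \<tau>g \<epsilon> (v k) \<rho> (g k) i j
          + Z j - v k / \<epsilon> * Dx_app nx Hx Qx (g k) i j - v k / \<epsilon>^2 * Dx_app nx Hx Qx \<rho> i j)" by simp
      qed
      also have "\<dots> = - \<sigma> * (\<Sum>j\<le>nx. Hx j j * (g k i j)^2)
          + (\<Sum>j\<le>nx. Hx j j * g k i j * satg nx Hx \<tau>g \<epsilon> (v k) \<rho> (g k) i j)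
          + (\<Sum>j\<le>nx. Hx j j * g k i j * Z j)
          - v k / \<epsilon> * (\<Sum>j\<le>nx. Hx j j * g k i j * Dx_app nx Hx Qx (g k) i j)
          - v k / \<epsilon>^2 * (\<Sum>j\<le>nx. Hx j j * g k i j * Dx_app nx Hx Qx \<rho> i j)"
        by (simp add: algebra_simps sum.distrib sum_subtractf sum_distrib_left power2_eq_square sum_negf)
      also have "\<dots> = - \<sigma> * (\<Sum>j\<le>nx. Hx j j * (g k i j)^2) + sat k + (\<Sum>j\<le>nx. Hx j j * g k i j * Z j)
        - v k / \<epsilon> * (((g k i nx)^2 - (g k i 0)^2) / 2) - v k / \<epsilon>^2 * BG i k"
      proof -
        have q1: "(\<Sum>j\<le>nx. Hx j j * g k i j * Dx_app nx Hx Qx (g k) i j) = ((g k i nx)^2 - (g k i 0)^2) / 2"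
          using Dx_w[where Hx=Hx and nx=nx and a="\<lambda>j. g k i j" and Qx=Qx and u="g k" and i=i, OF Hxpos]
            quadf[OF nx1 Qx, of "\<lambda>j. g k i j"] by simp
        have q2: "(\<Sum>j\<le>nx. Hx j j * g k i j * Dx_app nx Hx Qx \<rho> i j) = BG i k"
          using Dx_w[where Hx=Hx and nx=nx and a="\<lambda>j. g k i j" and Qx=Qx and u=\<rho> and i=i, OF Hxpos]
          unfolding BG_def by simp
        have q3: "(\<Sum>j\<le>nx. Hx j j * g k i j * satg nx Hx \<tau>g \<epsilon> (v k) \<rho> (g k) i j) = sat k"
          using satg_w[where Hx=Hx and nx=nx and a="\<lambda>j. g k i j" and \<tau>g=\<tau>g and \<epsilon>=\<epsilon> and vk="v k" and \<rho>=\<rho> and gk="g k" and i=i, OF Hx0 HxR]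
          unfolding sat_def by simp
        show ?thesis by (simp only: q1 q2 q3)
      qed
      finally show ?thesis .
    qed
    have Zsum: "(\<Sum>k=1..nv. \<omega> k * (\<Sum>j\<le>nx. Hx j j * g k i j * Z j)) = 0"
    proof -
      have "(\<Sum>k=1..nv. \<omega> k * (\<Sum>j\<le>nx. Hx j j * g k i j * Z j))
          = (\<Sum>j\<le>nx. Hx j j * Z j * vavg nv \<omega> (\<lambda>k. g k i j))"
        unfolding vavg_def by (simp add: sum_distrib_left mult_ac, rule sum.swap)
      also have "\<dots> = 0" using avg0 i by simp
      finally show ?thesis .
    qed
    define E where "E = (\<lambda>k. - \<tau>\<rho> * (\<rho> i 0 * (vpos (v k) * (\<rho> i 0 + \<epsilon> * g k i 0)))
        + \<tau>\<rho> * (\<rho> i nx * (vneg (v k) * (\<rho> i nx + \<epsilon> * g k i nx)))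
        - v k * (BR i k + BG i k) + \<epsilon>^2 * sat k
        - \<epsilon>^2 * (v k / \<epsilon> * (((g k i nx)^2 - (g k i 0)^2) / 2)))"
    define A where "A = (\<lambda>k. \<Sum>j\<le>nx. Hx j j * (g k i j)^2)"
    define q where "q = (\<lambda>k. ((g k i nx)^2 - (g k i 0)^2) / 2)"
    have S1: "(\<Sum>k=1..nv. \<omega> k * Tg k i) = - \<sigma> * (\<Sum>k=1..nv. \<omega> k * A k) + (\<Sum>k=1..nv. \<omega> k * sat k)
        + (\<Sum>k=1..nv. \<omega> k * (\<Sum>j\<le>nx. Hx j j * g k i j * Z j))
        - (\<Sum>k=1..nv. \<omega> k * v k * q k) / \<epsilon> - (\<Sum>k=1..nv. \<omega> k * v k * BG i k) / \<epsilon>^2"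
    proof -
      have "(\<Sum>k=1..nv. \<omega> k * Tg k i) = (\<Sum>k=1..nv. - \<sigma> * (\<omega> k * A k) + \<omega> k * sat k
        + \<omega> k * (\<Sum>j\<le>nx. Hx j j * g k i j * Z j)
        - \<omega> k * v k * q k / \<epsilon> - \<omega> k * v k * BG i k / \<epsilon>^2)"
        using eps by (intro sum.cong refl) (simp add: TG A_def q_def field_simps)
      also have "\<dots> = - \<sigma> * (\<Sum>k=1..nv. \<omega> k * A k) + (\<Sum>k=1..nv. \<omega> k * sat k)
        + (\<Sum>k=1..nv. \<omega> k * (\<Sum>j\<le>nx. Hx j j * g k i j * Z j))
        - (\<Sum>k=1..nv. \<omega> k * v k * q k) / \<epsilon> - (\<Sum>k=1..nv. \<omega> k * v k * BG i k) / \<epsilon>^2"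
        by (simp add: sum.distrib sum_subtractf sum_distrib_left sum_divide_distrib sum_negf)
      finally show ?thesis .
    qed
    have S2: "(\<Sum>k=1..nv. \<omega> k * E k) = - \<tau>\<rho> * (\<rho> i 0 * F i 0) + \<tau>\<rho> * (\<rho> i nx * G i nx)
        - (\<Sum>k=1..nv. \<omega> k * v k * BR i k) - (\<Sum>k=1..nv. \<omega> k * v k * BG i k)
        + \<epsilon>^2 * (\<Sum>k=1..nv. \<omega> k * sat k) - \<epsilon> * (\<Sum>k=1..nv. \<omega> k * v k * q k)"
    proof -
      have "(\<Sum>k=1..nv. \<omega> k * E k) = (\<Sum>k=1..nv. - \<tau>\<rho> * (\<rho> i 0 * (\<omega> k * (vpos (v k) * (\<rho> i 0 + \<epsilon> * g k i 0))))
        + \<tau>\<rho> * (\<rho> i nx * (\<omega> k * (vneg (v k) * (\<rho> i nx + \<epsilon> * g k i nx))))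
        - \<omega> k * v k * BR i k - \<omega> k * v k * BG i k + \<epsilon>^2 * (\<omega> k * sat k) - \<epsilon> * (\<omega> k * v k * q k))"
        using eps by (intro sum.cong refl) (simp add: E_def q_def algebra_simps power2_eq_square)
      also have "\<dots> = - \<tau>\<rho> * (\<rho> i 0 * F i 0) + \<tau>\<rho> * (\<rho> i nx * G i nx)
        - (\<Sum>k=1..nv. \<omega> k * v k * BR i k) - (\<Sum>k=1..nv. \<omega> k * v k * BG i k)
        + \<epsilon>^2 * (\<Sum>k=1..nv. \<omega> k * sat k) - \<epsilon> * (\<Sum>k=1..nv. \<omega> k * v k * q k)"
        unfolding F_def G_def vavg_def
        by (simp add: sum.distrib sum_subtractf sum_distrib_left sum_negf)
      finally show ?thesis .
    qed
    have Epsi: "\<omega> k * E k \<le> \<omega> k * (v k / (2*\<epsilon>) * ((\<rho> i nx)^2 - (\<rho> i 0)^2))" if k: "k \<in> {1..nv}" for k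
    proof -
      have bb: "BR i k + BG i k = \<rho> i nx * g k i nx - \<rho> i 0 * g k i 0"
        using bilin[OF nx1 Qx, of "\<lambda>j. \<rho> i j" "\<lambda>j. g k i j"] unfolding BR_def BG_def by simp
      have "E k - v k / (2*\<epsilon>) * ((\<rho> i nx)^2 - (\<rho> i 0)^2) \<le> 0"
        using psi_le[where \<epsilon>=\<epsilon> and v="v k" and aL="\<rho> i 0" and bL="g k i 0" and aR="\<rho> i nx" and bR="g k i nx", OF eps]
        unfolding E_def sat_def tau_rho tau_g bb by simp
      then have "E k \<le> v k / (2*\<epsilon>) * ((\<rho> i nx)^2 - (\<rho> i 0)^2)" by linarith
      moreover have "0 \<le> \<omega> k" using wpos k by (simp add: less_imp_le)
      ultimately show ?thesis by (rule mult_left_mono)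
    qed
    have Eneg: "(\<Sum>k=1..nv. \<omega> k * E k) \<le> 0"
    proof -
      have "(\<Sum>k=1..nv. \<omega> k * E k) \<le> (\<Sum>k=1..nv. \<omega> k * (v k / (2*\<epsilon>) * ((\<rho> i nx)^2 - (\<rho> i 0)^2)))"
        using Epsi by (rule sum_mono)
      also have "\<dots> = (\<Sum>k=1..nv. \<omega> k * v k) * (((\<rho> i nx)^2 - (\<rho> i 0)^2) / (2*\<epsilon>))"
        by (simp add: sum_distrib_right sum_divide_distrib mult_ac)
      also have "\<dots> = 0" using wv by simp
      finally show ?thesis .
    qed
    have A0: "0 \<le> (\<Sum>k=1..nv. \<omega> k * A k)"
      unfolding A_def using wpos Hxpos
      by (intro sum_nonneg mult_nonneg_nonneg) (auto intro!: sum_nonneg mult_nonneg_nonneg less_imp_le)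
    have R0: "0 \<le> (\<Sum>j\<le>nx. Hx j j * (\<rho> i j)^2)"
      using Hxpos by (intro sum_nonneg mult_nonneg_nonneg) (auto intro: less_imp_le)
    have e1: "\<epsilon>^2 * ((\<Sum>k=1..nv. \<omega> k * v k * q k) / \<epsilon>) = \<epsilon> * (\<Sum>k=1..nv. \<omega> k * v k * q k)"
      using eps by (simp add: power2_eq_square)
    have e2: "\<epsilon>^2 * ((\<Sum>k=1..nv. \<omega> k * v k * BG i k) / \<epsilon>^2) = (\<Sum>k=1..nv. \<omega> k * v k * BG i k)"
      using eps by simp
    have p1: "0 \<le> \<sigma>a * (\<Sum>j\<le>nx. Hx j j * (\<rho> i j)^2)" using siga R0 by simp
    have p2: "0 \<le> \<epsilon>^2 * (\<sigma> * (\<Sum>k=1..nv. \<omega> k * A k))" using sig A0 by simp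
    have "Ti i + \<epsilon>^2 * (\<Sum>k=1..nv. \<omega> k * Tg k i)
       = - \<sigma>a * (\<Sum>j\<le>nx. Hx j j * (\<rho> i j)^2) - \<epsilon>^2 * (\<sigma> * (\<Sum>k=1..nv. \<omega> k * A k))
         + (\<Sum>k=1..nv. \<omega> k * E k)"
      unfolding TI S1 S2 Zsum using e1 e2 by (simp add: algebra_simps)
    then show ?thesis using Eneg p1 p2 by linarith
  qed
  have glob: "(\<Sum>i\<le>nt. Ht i i * (Ti i + \<epsilon>^2 * (\<Sum>k=1..nv. \<omega> k * Tg k i))) \<le> 0"
    using perI Htpos by (intro sum_nonpos mult_nonneg_nonpos) (auto intro: less_imp_le)
  have split: "(\<Sum>i\<le>nt. Ht i i * (Ti i + \<epsilon>^2 * (\<Sum>k=1..nv. \<omega> k * Tg k i)))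
     = (\<Sum>i\<le>nt. Ht i i * Ti i) + \<epsilon>^2 * (\<Sum>k=1..nv. \<omega> k * (\<Sum>i\<le>nt. Ht i i * Tg k i))"
    by (simp add: sum.distrib sum_distrib_left algebra_simps, rule sum.swap)
  define ER where "ER = (\<Sum>j\<le>nx. Hx j j * (((\<rho> nt j)^2 - (\<rho> 0 j)^2) / 2 + \<rho> 0 j * (\<rho> 0 j - \<rho>0 0 j)))"
  define EG where "EG = (\<lambda>k. \<Sum>j\<le>nx. Hx j j * (((g k nt j)^2 - (g k 0 j)^2) / 2 + g k 0 j * (g k 0 j - g0 k 0 j)))"
  have tr: "(\<Sum>i\<le>nt. Ht i i * Ti i) = ER"
    unfolding Ti_def ER_def by (rule time_part[where Ht=Ht and nt=nt and Qt=Qt, OF nt1 Htpos Qt])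
  have tg: "(\<Sum>i\<le>nt. Ht i i * Tg k i) = EG k" for k
    unfolding Tg_def EG_def by (rule time_part[where Ht=Ht and nt=nt and Qt=Qt, OF nt1 Htpos Qt])
  have erb: "ER \<ge> 1/2 * slab_energy nx Hx nt \<rho> - 1/2 * slab_energy nx Hx 0 \<rho>0"
    unfolding ER_def slab_diag[OF dx] by (rule energy_bound[where Hx=Hx and nx=nx, OF Hxpos])
  have egb: "\<omega> k * EG k \<ge> \<omega> k * (1/2 * slab_energy nx Hx nt (g k) - 1/2 * slab_energy nx Hx 0 (g0 k))"
    if k: "k \<in> {1..nv}" for k
  proof -
    have "EG k \<ge> 1/2 * slab_energy nx Hx nt (g k) - 1/2 * slab_energy nx Hx 0 (g0 k)"
      unfolding EG_def slab_diag[OF dx] by (rule energy_bound[where Hx=Hx and nx=nx, OF Hxpos])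
    then show ?thesis using wpos k by (intro mult_left_mono) (auto intro: less_imp_le)
  qed
  have "(\<Sum>k=1..nv. \<omega> k * EG k) \<ge> (\<Sum>k=1..nv. \<omega> k * (1/2 * slab_energy nx Hx nt (g k) - 1/2 * slab_energy nx Hx 0 (g0 k)))"
    using egb by (rule sum_mono)
  also have "(\<Sum>k=1..nv. \<omega> k * (1/2 * slab_energy nx Hx nt (g k) - 1/2 * slab_energy nx Hx 0 (g0 k)))
     = 1/2 * vavg nv \<omega> (\<lambda>k. slab_energy nx Hx nt (g k)) - 1/2 * vavg nv \<omega> (\<lambda>k. slab_energy nx Hx 0 (g0 k))"
    unfolding vavg_def by (simp add: sum_subtractf sum_distrib_left algebra_simps)
  finally have egs: "(\<Sum>k=1..nv. \<omega> k * EG k) \<ge> 1/2 * vavg nv \<omega> (\<lambda>k. slab_energy nx Hx nt (g k)) - 1/2 * vavg nv \<omega> (\<lambda>k. slab_energy nx Hx 0 (g0 k))" .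
  have fin: "ER + \<epsilon>^2 * (\<Sum>k=1..nv. \<omega> k * EG k) \<le> 0"
    using glob unfolding split tr tg .
  have "\<epsilon>^2 * (\<Sum>k=1..nv. \<omega> k * EG k) \<ge> \<epsilon>^2 * (1/2 * vavg nv \<omega> (\<lambda>k. slab_energy nx Hx nt (g k)) - 1/2 * vavg nv \<omega> (\<lambda>k. slab_energy nx Hx 0 (g0 k)))"
    using egs by (intro mult_left_mono) auto
  then show ?thesis using fin erb by (simp add: algebra_simps)
qed

end
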